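(* Let $G_0$ be a directed multigraph on vertex set $\{0,1,\dots,n+1\}$, each edge $(p,q)$ oriented $p\to q$ with $p<q$, and suppose $(i,j),(j,k)\in E(G_0)$ for some $i<j<k$. Let $G_1$ and $G_2$ be the multigraphs on the same vertex set with edge multisets $$E(G_1)=E(G_0)\setminus\{(j,k)\}\cup\{(i,k)\},\qquad E(G_2)=E(G_0)\setminus\{(i,j)\}\cup\{(i,k)\}$$ (one copy removed, one copy added). For $r\in[n]$ let $d_r=\operatorname{indeg}_{G_0}(r)-1$, $d_r'=\operatorname{indeg}_{G_1}(r)-1$, $d_r''=\operatorname{indeg}_{G_2}(r)-1$, and set $\mathbf d=(0,d_1,\dots,d_n,-\sum_{r=1}^n d_r)$, $\mathbf d_1=(0,d'_1,\dots,d'_n,-\sum_{r=1}^n d'_r)$, $\mathbf d_2=(0,d''_1,\dots,d''_n,-\sum_{r=1}^n d''_r)$. Then $$K_{G_0}(\mathbf d)=K_{G_1}(\mathbf d_1)+K_{G_2}(\mathbf d_2).$$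
   Context: For a directed multigraph $G$ on $\{0,\dots,n+1\}$ and a vector $\mathbf a=(a_0,\dots,a_{n+1})$ with $\sum_i a_i=0$, the flow polytope $\mathcal F_G(\mathbf a)$ is the set of $f\in\mathbb R_{\ge0}^{E(G)}$ such that at each vertex $v$ the net flow (outgoing minus incoming) equals $a_v$, and $K_G(\mathbf a)$ is the number of integer points of $\mathcal F_G(\mathbf a)$. *)

theory Defs
  imports Main
begin

text \<open>A directed multigraph on vertices {0..n+1} is represented by a list of edges
  (p, q) (each list entry is one copy of the edge; the order of the list is irrelevant).
  An integer flow assigns a natural number to each edge copy (list index); it is
  zero outside the index range.\<close>

definition net_flow :: "(nat \<times> nat) list \<Rightarrow> (nat \<Rightarrow> nat) \<Rightarrow> nat \<Rightarrow> int" where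
  "net_flow E f v =
     (\<Sum>e<length E. if fst (E ! e) = v then int (f e) else 0)
   - (\<Sum>e<length E. if snd (E ! e) = v then int (f e) else 0)"

definition flow_int_points :: "nat \<Rightarrow> (nat \<times> nat) list \<Rightarrow> (nat \<Rightarrow> int) \<Rightarrow> (nat \<Rightarrow> nat) set" where
  "flow_int_points n E a =
     {f. (\<forall>e. length E \<le> e \<longrightarrow> f e = 0) \<and> (\<forall>v \<le> n + 1. net_flow E f v = a v)}"

definition K :: "nat \<Rightarrow> (nat \<times> nat) list \<Rightarrow> (nat \<Rightarrow> int) \<Rightarrow> nat" where
  "K n E a = card (flow_int_points n E a)"

definition indeg :: "(nat \<times> nat) list \<Rightarrow> nat \<Rightarrow> nat" where
  "indeg E r = length (filter (\<lambda>e. snd e = r) E)"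

definition dvec :: "nat \<Rightarrow> (nat \<times> nat) list \<Rightarrow> nat \<Rightarrow> int" where
  "dvec n E v =
     (if v = 0 then 0
      else if v \<le> n then int (indeg E v) - 1
      else if v = n + 1 then - (\<Sum>r=1..n. int (indeg E r) - 1)
      else 0)"

end

theory Submission
  imports Defs "HOL-Combinatorics.Permutations"
begin

definition ok :: "nat \<Rightarrow> (nat \<times> nat) list \<Rightarrow> bool" where
  "ok n E \<longleftrightarrow> (\<forall>(p, q) \<in> set E. p < q \<and> q \<le> n + 1)"

lemma potential_identity:
  assumes "ok n E"
  shows "(\<Sum>v\<le>n+1. int v * net_flow E f v)
       = (\<Sum>e<length E. int (f e) * (int (fst (E!e)) - int (snd (E!e))))"
proof -
  have b: "fst (E!e) \<le> n+1 \<and> snd (E!e) \<le> n+1" if "e < length E" for e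
    using assms that nth_mem[OF that] unfolding ok_def by fastforce
  have "(\<Sum>v\<le>n+1. int v * net_flow E f v)
      = (\<Sum>v\<le>n+1. \<Sum>e<length E. (if fst (E ! e) = v then int v * int (f e) else 0))
      - (\<Sum>v\<le>n+1. \<Sum>e<length E. (if snd (E ! e) = v then int v * int (f e) else 0))"
    unfolding net_flow_def by (simp add: right_diff_distrib sum_distrib_left sum_subtractf if_distrib cong: if_cong)
  also have "\<dots> = (\<Sum>e<length E. \<Sum>v\<le>n+1. (if fst (E ! e) = v then int v * int (f e) else 0))
      - (\<Sum>e<length E. \<Sum>v\<le>n+1. (if snd (E ! e) = v then int v * int (f e) else 0))"
    by (simp add: sum.swap[of _ "{..<length E}"])
  also have "\<dots> = (\<Sum>e<length E. int (fst (E!e)) * int (f e)) - (\<Sum>e<length E. int (snd (E!e)) * int (f e))"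
  proof -
    have "\<And>e. e < length E \<Longrightarrow> (\<Sum>v\<le>n+1. (if fst (E ! e) = v then int v * int (f e) else 0)) = int (fst (E!e)) * int (f e)"
      using b by (subst sum.delta') auto
    moreover have "\<And>e. e < length E \<Longrightarrow> (\<Sum>v\<le>n+1. (if snd (E ! e) = v then int v * int (f e) else 0)) = int (snd (E!e)) * int (f e)"
      using b by (subst sum.delta') auto
    ultimately show ?thesis by simp
  qed
  finally show ?thesis by (simp add: sum_subtractf[symmetric] algebra_simps)
qed

lemma finite_F:
  assumes "ok n E"
  shows "finite (flow_int_points n E a)"
proof -
  define L where "L = length E"
  define B where "B = nat (- (\<Sum>v\<le>n+1. int v * a v))"
  have bound: "f e \<le> B" if f: "f \<in> flow_int_points n E a" and e: "e < L" for f e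
  proof -
    have "(\<Sum>v\<le>n+1. int v * net_flow E f v) = (\<Sum>v\<le>n+1. int v * a v)"
      using f unfolding flow_int_points_def by auto
    hence eq: "(\<Sum>e<L. int (f e) * (int (snd (E!e)) - int (fst (E!e)))) = - (\<Sum>v\<le>n+1. int v * a v)"
      using potential_identity[OF assms, of f] unfolding L_def
      by (simp add: sum_negf[symmetric] algebra_simps)
    have pos: "\<And>e. e < L \<Longrightarrow> int (snd (E!e)) - int (fst (E!e)) \<ge> 1"
      using assms unfolding ok_def L_def by (fastforce dest: nth_mem)
    have "int (f e) \<le> int (f e) * (int (snd (E!e)) - int (fst (E!e)))"
      using pos[OF e] by (simp add: mult_le_cancel_left1)
    also have "\<dots> \<le> (\<Sum>e<L. int (f e) * (int (snd (E!e)) - int (fst (E!e))))"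
      by (rule member_le_sum) (use e in \<open>auto\<close>, metis pos mult_nonneg_nonneg of_nat_0_le_iff order_trans zero_le_one lessThan_iff)
    finally show ?thesis using eq unfolding B_def by linarith
  qed
  let ?h = "\<lambda>f. map f [0..<L]"
  have "inj_on ?h (flow_int_points n E a)"
  proof
    fix f g assume f: "f \<in> flow_int_points n E a" and g: "g \<in> flow_int_points n E a"
      and eq: "?h f = ?h g"
    show "f = g"
    proof
      fix e show "f e = g e"
      proof (cases "e < L")
        case True then show ?thesis using eq by (metis add_0 diff_zero nth_map_upt)
      next
        case False then show ?thesis using f g unfolding flow_int_points_def L_def by auto
      qed
    qed
  qed
  moreover have "?h ` flow_int_points n E a \<subseteq> {xs. set xs \<subseteq> {..B} \<and> length xs = L}"
    using bound by auto
  moreover have "finite {xs. set xs \<subseteq> {..B} \<and> length xs = L}"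
    by (rule finite_lists_length_eq) auto
  ultimately show ?thesis by (rule inj_on_finite)
qed


lemma card_perm_le:
  assumes m: "mset xs = mset ys" and okx: "ok n xs"
  shows "card (flow_int_points n ys a) \<le> card (flow_int_points n xs a)"
proof -
  obtain p where p: "p permutes {..<length ys}" and pl: "permute_list p ys = xs"
    using mset_eq_permutation[OF m] by blast
  define L where "L = length ys"
  have lx: "length xs = L" using pl L_def by auto
  have xn: "xs ! m = ys ! p m" if "m < L" for m
    using pl p that L_def by (auto simp: permute_list_nth)
  have bij: "bij_betw p {..<L} {..<L}" using p L_def permutes_imp_bij by blast
  let ?h = "\<lambda>g m. if m < L then g (p m) else 0"
  have nf: "net_flow xs (?h g) v = net_flow ys g v" for g v
  proof -
    have "(\<Sum>e<L. if fst (xs ! e) = v then int (?h g e) else 0) = (\<Sum>e<L. (\<lambda>m. if fst (ys ! m) = v then int (g m) else 0) (p e))"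
      by (rule sum.cong) (auto simp: xn)
    also have "\<dots> = (\<Sum>e<L. if fst (ys ! e) = v then int (g e) else 0)"
      by (rule sum.reindex_bij_betw[OF bij])
    finally have 1: "(\<Sum>e<L. if fst (xs ! e) = v then int (?h g e) else 0) = (\<Sum>e<L. if fst (ys ! e) = v then int (g e) else 0)" .
    have "(\<Sum>e<L. if snd (xs ! e) = v then int (?h g e) else 0) = (\<Sum>e<L. (\<lambda>m. if snd (ys ! m) = v then int (g m) else 0) (p e))"
      by (rule sum.cong) (auto simp: xn)
    also have "\<dots> = (\<Sum>e<L. if snd (ys ! e) = v then int (g e) else 0)"
      by (rule sum.reindex_bij_betw[OF bij])
    finally have 2: "(\<Sum>e<L. if snd (xs ! e) = v then int (?h g e) else 0) = (\<Sum>e<L. if snd (ys ! e) = v then int (g e) else 0)" .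
    show ?thesis unfolding net_flow_def lx 1 2 L_def[symmetric] ..
  qed
  have "inj_on ?h (flow_int_points n ys a)"
  proof
    fix f g assume f: "f \<in> flow_int_points n ys a" and g: "g \<in> flow_int_points n ys a"
      and eq: "?h f = ?h g"
    show "f = g"
    proof
      fix e show "f e = g e"
      proof (cases "e < L")
        case True
        then have "inv p e < L" using permutes_in_image[OF permutes_inv[OF p], THEN iffD2, of e] L_def by simp
        moreover have "p (inv p e) = e" using p by (simp add: permutes_inverses)
        ultimately show ?thesis using fun_cong[OF eq, of "inv p e"] by simp
      next
        case False then show ?thesis using f g unfolding flow_int_points_def L_def by auto
      qed
    qed
  qed
  moreover have "?h ` flow_int_points n ys a \<subseteq> flow_int_points n xs a"
    using nf lx unfolding flow_int_points_def by auto
  ultimately show ?thesis using finite_F[OF okx] by (rule card_inj_on_le)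
qed

lemma ok_mset: "mset xs = mset ys \<Longrightarrow> ok n ys \<Longrightarrow> ok n xs"
  unfolding ok_def by (metis set_mset_mset)

lemma K_perm: "mset xs = mset ys \<Longrightarrow> ok n ys \<Longrightarrow> K n xs a = K n ys a"
  unfolding K_def by (rule antisym) (auto intro!: card_perm_le dest: ok_mset)

lemma indeg_perm: "mset xs = mset ys \<Longrightarrow> indeg xs r = indeg ys r"
  unfolding indeg_def by (metis mset_filter size_mset)

lemma dvec_perm: assumes "mset xs = mset ys" shows "dvec n xs = dvec n ys"
proof -
  have "indeg xs = indeg ys" by (rule ext) (rule indeg_perm[OF assms])
  then show ?thesis unfolding dvec_def by (simp only:)
qed

definition contr :: "nat \<times> nat \<Rightarrow> nat \<Rightarrow> nat \<Rightarrow> int" where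
  "contr e x v = (if fst e = v then int x else 0) - (if snd e = v then int x else 0)"

lemma net_flow_Cons: "net_flow (e # R) f v = contr e (f 0) v + net_flow R (\<lambda>m. f (Suc m)) v"
  unfolding net_flow_def contr_def
  by (simp only: length_Cons sum.lessThan_Suc_shift nth_Cons_0 nth_Cons_Suc)

lemma indeg_Cons: "int (indeg (e # R) r) = (if snd e = r then 1 else 0) + int (indeg R r)"
  unfolding indeg_def by auto


lemma F_cons2:
  "f \<in> flow_int_points n (e1 # e2 # R) a \<longleftrightarrow>
    (\<forall>e. Suc (Suc (length R)) \<le> e \<longrightarrow> f e = 0) \<and>
    (\<forall>v\<le>n+1. contr e1 (f 0) v + contr e2 (f 1) v + net_flow R (\<lambda>m. f (Suc (Suc m))) v = a v)"
  unfolding flow_int_points_def by (simp add: net_flow_Cons add.assoc)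

lemma split_main:
  assumes okE: "ok n ((i,j)#(j,k)#R)" and ij: "i<j" and jk: "j<k"
    and a2: "\<forall>v\<le>n+1. a2 v = a v - (if v=j then 1 else 0) + (if v=k then 1 else 0)"
  shows "card (flow_int_points n ((i,j)#(j,k)#R) a)
       = card (flow_int_points n ((i,j)#(i,k)#R) a) + card (flow_int_points n ((i,k)#(j,k)#R) a2)"
proof -
  define F0 where "F0 = flow_int_points n ((i,j)#(j,k)#R) a"
  define F1 where "F1 = flow_int_points n ((i,j)#(i,k)#R) a"
  define F2 where "F2 = flow_int_points n ((i,k)#(j,k)#R) a2"
  define A where "A = {f\<in>F0. f 1 \<le> f 0}"
  define B where "B = {f\<in>F0. f 0 < f 1}"
  have fin: "finite F0" unfolding F0_def by (rule finite_F[OF okE])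
  have U: "F0 = A \<union> B" "A \<inter> B = {}" unfolding A_def B_def by auto
  have cU: "card F0 = card A + card B"
    using U fin by (simp add: card_Un_disjoint)
  have C1: "contr (i,j) (x-y) v + contr (i,k) y v = contr (i,j) x v + contr (j,k) y v"
    if "y \<le> x" for x y v using that ij jk by (auto simp: contr_def of_nat_diff)
  have C1': "contr (i,j) x v + contr (i,k) y v = contr (i,j) (x+y) v + contr (j,k) y v"
    for x y v using ij jk by (auto simp: contr_def)
  have C2: "contr (i,k) x v + contr (j,k) (y - Suc x) v = contr (i,j) x v + contr (j,k) y v - (if v=j then 1 else 0) + (if v=k then 1 else 0)"
    if "x < y" for x y v using that ij jk by (auto simp: contr_def of_nat_diff)
  have C2': "contr (i,k) x v + contr (j,k) y v = contr (i,j) x v + contr (j,k) (y+x+1) v - (if v=j then 1 else 0) + (if v=k then 1 else 0)"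
    for x y v using ij jk by (auto simp: contr_def)
  have b1: "bij_betw (\<lambda>f. f(0 := f 0 - f 1)) A F1"
  proof (rule bij_betw_byWitness[where f' = "\<lambda>g. g(0 := g 0 + g 1)"])
    show "\<forall>f\<in>A. (f(0 := f 0 - f 1))(0 := (f(0 := f 0 - f 1)) 0 + (f(0 := f 0 - f 1)) 1) = f"
      unfolding A_def by auto
    show "\<forall>g\<in>F1. (g(0 := g 0 + g 1))(0 := (g(0 := g 0 + g 1)) 0 - (g(0 := g 0 + g 1)) 1) = g"
      by auto
    show "(\<lambda>f. f(0 := f 0 - f 1)) ` A \<subseteq> F1"
      unfolding A_def F0_def F1_def by (auto simp: F_cons2 C1)
    show "(\<lambda>g. g(0 := g 0 + g 1)) ` F1 \<subseteq> A"
      unfolding A_def F0_def F1_def by (auto simp: F_cons2 C1')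
  qed
  have b2: "bij_betw (\<lambda>f. f(1 := f 1 - f 0 - 1)) B F2"
  proof (rule bij_betw_byWitness[where f' = "\<lambda>g. g(1 := g 1 + g 0 + 1)"])
    show "\<forall>f\<in>B. (f(1 := f 1 - f 0 - 1))(1 := (f(1 := f 1 - f 0 - 1)) 1 + (f(1 := f 1 - f 0 - 1)) 0 + 1) = f"
      unfolding B_def by auto
    show "\<forall>g\<in>F2. (g(1 := g 1 + g 0 + 1))(1 := (g(1 := g 1 + g 0 + 1)) 1 - (g(1 := g 1 + g 0 + 1)) 0 - 1) = g"
      by auto
    show "(\<lambda>f. f(1 := f 1 - f 0 - 1)) ` B \<subseteq> F2"
      unfolding B_def F0_def F2_def using a2 jk by (auto simp: F_cons2 C2 add.assoc[symmetric])
    show "(\<lambda>g. g(1 := g 1 + g 0 + 1)) ` F2 \<subseteq> B"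
      unfolding B_def F0_def F2_def using a2 jk by (auto simp: F_cons2 C2' add.assoc)
  qed
  show ?thesis
    using cU bij_betw_same_card[OF b1] bij_betw_same_card[OF b2]
    unfolding F0_def F1_def F2_def by simp
qed


lemma indeg_int: "int (indeg ((a,b)#(c,d)#R) r) = (if b = r then 1 else 0) + (if d = r then 1 else 0) + int (indeg R r)"
  unfolding indeg_def by auto

lemma mset_add_remove1: "x \<in> set xs \<Longrightarrow> mset xs = add_mset x (mset (remove1 x xs))"
  by (induct xs) auto

theorem lemma3p3:
  fixes n i j k :: nat and E0 :: "(nat \<times> nat) list"
  assumes edges: "\<forall>(p, q) \<in> set E0. p < q \<and> q \<le> n + 1"
    and ij: "(i, j) \<in> set E0" and jk: "(j, k) \<in> set E0"
    and "i < j" and "j < k"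
  shows "K n E0 (dvec n E0)
       = K n ((i, k) # remove1 (j, k) E0) (dvec n ((i, k) # remove1 (j, k) E0))
       + K n ((i, k) # remove1 (i, j) E0) (dvec n ((i, k) # remove1 (i, j) E0))"
proof -
  define R where "R = remove1 (j,k) (remove1 (i,j) E0)"
  define L0 where "L0 = (i,j)#(j,k)#R"
  define L1 where "L1 = (i,j)#(i,k)#R"
  define L2 where "L2 = (i,k)#(j,k)#R"
  have ne: "(i,j) \<noteq> (j,k)" using \<open>i<j\<close> by auto
  have jk': "(j,k) \<in> set (remove1 (i,j) E0)" using jk ne by (metis in_set_remove1)
  have A1: "mset (remove1 (i,j) E0) = add_mset (j,k) (mset R)"
    unfolding R_def using jk' by (rule mset_add_remove1)
  have A0: "mset E0 = add_mset (i,j) (mset (remove1 (i,j) E0))"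
    using ij by (rule mset_add_remove1)
  have m0: "mset E0 = mset L0"
    unfolding L0_def using A0 A1 by simp
  have m1: "mset ((i, k) # remove1 (j, k) E0) = mset L1"
  proof -
    have "mset E0 = mset ((j,k) # (i,j) # R)" using m0 unfolding L0_def by simp
    then show ?thesis unfolding L1_def using jk by simp
  qed
  have m2: "mset ((i, k) # remove1 (i, j) E0) = mset L2"
    unfolding L2_def using A1 by simp
  have ok0: "ok n E0" using edges unfolding ok_def .
  have kn: "k \<le> n + 1" using edges jk by auto
  have okL0: "ok n L0" using ok_mset[OF m0[symmetric] ok0] .
  have okL1: "ok n L1" unfolding L1_def ok_def using okL0 kn \<open>i<j\<close> \<open>j<k\<close> unfolding L0_def ok_def by auto
  have okL2: "ok n L2" unfolding L2_def ok_def using okL0 kn \<open>i<j\<close> \<open>j<k\<close> unfolding L0_def ok_def by auto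
  have e0: "K n E0 (dvec n E0) = K n L0 (dvec n L0)"
    using K_perm[OF m0 okL0] dvec_perm[OF m0] by simp
  have e1: "K n ((i, k) # remove1 (j, k) E0) (dvec n ((i, k) # remove1 (j, k) E0)) = K n L1 (dvec n L1)"
    using K_perm[OF m1 okL1] dvec_perm[OF m1] by simp
  have e2: "K n ((i, k) # remove1 (i, j) E0) (dvec n ((i, k) # remove1 (i, j) E0)) = K n L2 (dvec n L2)"
    using K_perm[OF m2 okL2] dvec_perm[OF m2] by simp
  have d1: "dvec n L1 = dvec n L0"
  proof -
    have "indeg L1 = indeg L0" by (rule ext) (simp add: L1_def L0_def indeg_def)
    then show ?thesis unfolding dvec_def by (simp only:)
  qed
  have ind2: "int (indeg L2 r) = int (indeg L0 r) - (if r = j then 1 else 0) + (if r = k then 1 else 0)" for r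
    unfolding L2_def L0_def indeg_int by auto
  have a2: "\<forall>v\<le>n+1. dvec n L2 v = dvec n L0 v - (if v=j then 1 else 0) + (if v=k then 1 else 0)"
  proof (intro allI impI)
    fix v assume v: "v \<le> n + 1"
    have j1: "1 \<le> j" "j \<le> n" using \<open>i<j\<close> \<open>j<k\<close> kn by auto
    have sum: "(\<Sum>r=1..n. int (indeg L2 r) - 1) = (\<Sum>r=1..n. int (indeg L0 r) - 1) - 1 + (if k \<le> n then 1 else 0)"
    proof -
      have "(\<Sum>r=1..n. int (indeg L2 r) - 1) = (\<Sum>r=1..n. (int (indeg L0 r) - 1) - (if r = j then 1 else 0) + (if r = k then 1 else 0))"
        by (rule sum.cong) (auto simp: ind2)
      also have "\<dots> = (\<Sum>r=1..n. int (indeg L0 r) - 1) - (\<Sum>r=1..n. (if r = j then 1 else 0)) + (\<Sum>r=1..n. (if r = k then 1 else 0))"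
        by (simp add: sum.distrib sum_subtractf)
      also have "\<dots> = (\<Sum>r=1..n. int (indeg L0 r) - 1) - 1 + (if k \<le> n then 1 else 0)"
        using j1 \<open>j<k\<close> by (simp add: sum.delta)
      finally show ?thesis .
    qed
    show "dvec n L2 v = dvec n L0 v - (if v=j then 1 else 0) + (if v=k then 1 else 0)"
      unfolding dvec_def sum using v j1 \<open>j<k\<close> kn by (auto simp: ind2)
  qed
  have main: "card (flow_int_points n L0 (dvec n L0))
       = card (flow_int_points n L1 (dvec n L0)) + card (flow_int_points n L2 (dvec n L2))"
    unfolding L0_def L1_def L2_def
    by (rule split_main[OF okL0[unfolded L0_def] \<open>i<j\<close> \<open>j<k\<close> a2[unfolded L0_def L2_def]])
  show ?thesis using e0 e1 e2 main d1 unfolding K_def by simp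
qed

end
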